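(* The span of the parallel adaptive mergesort is $O(\lg^3 n)$ on inputs of size $n$, in the binary-fork-join model.
   Context: Binary-fork-join model: a process may fork two children that run in parallel, the parent resuming when both complete; span is the length of the longest dependence path. The parallel adaptive mergesort splits the input into two halves, sorts them recursively in parallel, and merges the resulting trees with mergeHT: if $T_1$ is empty return $T_2$; if $T_2$ is empty return $T_1$; otherwise let $k$ be the root key of $T_1$ (chosen so that it cuts off at least a constant fraction of the keys of $T_1$ on each side); $(L_2,R_2)=\mathrm{split}(T_2,k)$; $k_1=\max(L_2)$, $k_2=\min(R_2)$; $(L_1,I)=\mathrm{split}(T_1,k_1)$; $(M,R_1)=\mathrm{split}(I,k_2)$; in parallel $T_L=\mathrm{mergeHT}(L_1,L_2)$, $T_R=\mathrm{mergeHT}(R_1,R_2)$; return $\mathrm{join}(\mathrm{join}(T_L,M),T_R)$. Trees are heterogeneous finger search trees, for which $\mathrm{split}$ (into keys less than / greater than a given key) and $\mathrm{join}$ (of two trees with non-interleaving key ranges) take worst-case time $O(\lg\max(|T_1|,|T_2|))$. *)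

theory Defs
  imports Main "HOL.Transcendental"
begin

text \<open>A heterogeneous finger search tree is
represented by its (finite) key set.  Every split / join / max / min on trees whose
sizes sum to at most n is charged lgc n = 1 + lg (n + 2), i.e. the worst-case
O(lg max(|T1|,|T2|)) bound with an explicit constant.\<close>

definition lgc :: "nat \<Rightarrow> real" where
  "lgc n = 1 + log 2 (real n + 2)"

definition balanced_root :: "real \<Rightarrow> 'a::linorder set \<Rightarrow> 'a \<Rightarrow> bool" where
  "balanced_root c T k \<longleftrightarrow> k \<in> T
     \<and> real (card {x\<in>T. x < k}) \<ge> c * real (card T) - 1
     \<and> real (card {x\<in>T. k < x}) \<ge> c * real (card T) - 1"

text \<open>Worst-case span of mergeHT(T1,T2), maximised over all admissible root keys of T1.
 split(T2,k) = (L2,R2); k1 = max L2; k2 = min R2; (L1,I) = split(T1,k1); (M,R1) = split(I,k2);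
 in parallel the two recursive merges; then join(join(TL,M),TR).  When L2 (resp. R2) is
 empty, L1 (resp. R1) is empty.\<close>

function merge_span :: "real \<Rightarrow> 'a::linorder set \<Rightarrow> 'a set \<Rightarrow> real" where
  "merge_span c T1 T2 =
    (if \<not> finite T1 \<or> \<not> finite T2 \<or> T1 = {} \<or> T2 = {} then 1
     else 1 + Max ((\<lambda>k.
        let L2 = {y\<in>T2. y < k}; R2 = {y\<in>T2. k < y};
            L1 = {x\<in>T1. \<exists>y\<in>L2. x < y}; R1 = {x\<in>T1. \<exists>y\<in>R2. y < x};
            M = T1 - L1 - R1
        in 3 * lgc (card T2) + 2 * lgc (card T1)
           + max (merge_span c L1 L2) (merge_span c R1 R2)
           + lgc (card L1 + card L2 + card M) + lgc (card T1 + card T2))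
        ` {k. balanced_root c T1 k}))"
  by pat_completeness auto
termination
proof (relation "measure (\<lambda>(c, T1, T2). card T1)", goal_cases)
  case 1 then show ?case by simp
next
  case (2 c T1 T2 x L2 R2 L1 R1 M)
  have fin: "finite T1" and xT: "x \<in> T1" using 2(1,2) by (auto simp: balanced_root_def)
  have "L1 \<subseteq> T1 - {x}" unfolding 2(3,5) by auto
  then have "card L1 < card T1" using fin xT
    by (metis card_Diff1_less card_mono finite_Diff order_le_less_trans)
  then show ?case by simp
next
  case (3 c T1 T2 x L2 R2 L1 R1 M)
  have fin: "finite T1" and xT: "x \<in> T1" using 3(1,2) by (auto simp: balanced_root_def)
  have "R1 \<subseteq> T1 - {x}" unfolding 3(4,6) by auto
  then have "card R1 < card T1" using fin xT
    by (metis card_Diff1_less card_mono finite_Diff order_le_less_trans)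
  then show ?case by simp
qed

function sort_span :: "real \<Rightarrow> 'a::linorder list \<Rightarrow> real" where
  "sort_span c xs =
    (if length xs \<le> 1 then 1
     else 1 + max (sort_span c (take (length xs div 2) xs))
                  (sort_span c (drop (length xs div 2) xs))
            + merge_span c (set (take (length xs div 2) xs)) (set (drop (length xs div 2) xs)))"
  by pat_completeness auto
termination
  by (relation "measure (\<lambda>(c, xs). length xs)") auto

end

theory Submission imports Defs begin
declare merge_span.simps[simp del] sort_span.simps[simp del]

lemma lgc_mono: "m \<le> n \<Longrightarrow> lgc m \<le> lgc n"
  unfolding lgc_def by simp

lemma lgc_nonneg: "0 \<le> lgc n"
  unfolding lgc_def by simp

lemma card_split:
  assumes "finite T" "k \<in> T"
  shows "card {x\<in>T. x < k} + card {x\<in>T. k < x} + 1 = card (T::'a::linorder set)"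
proof -
  have "T = {x\<in>T. x < k} \<union> {x\<in>T. k < x} \<union> {k}" using assms by auto
  moreover have "card ({x\<in>T. x < k} \<union> {x\<in>T. k < x} \<union> {k}) = card {x\<in>T. x < k} + card {x\<in>T. k < x} + 1"
    using assms by (subst card_Un_disjoint, auto)+
  ultimately show ?thesis by simp
qed

lemma merge_bound:
  fixes c :: real
  assumes c0: "0 < c" and c1: "c \<le> 1/2"
  defines "b \<equiv> 1/(1-c)" and "K \<equiv> \<bar>Max ({}::real set)\<bar>"
  shows "finite T1 \<Longrightarrow> finite T2 \<Longrightarrow> T1 \<noteq> {} \<Longrightarrow>
    merge_span c T1 (T2 :: 'a::linorder set) \<le> (1 + K + 7 * lgc (card T1 + card T2)) * (2 + log b (card T1))"
proof (induction "card T1" arbitrary: T1 T2 rule: less_induct)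
  case less
  define W where "W = (\<lambda>N. 1 + K + 7 * lgc N)"
  have Wmono: "\<And>m n. m \<le> n \<Longrightarrow> W m \<le> W n" unfolding W_def using lgc_mono by (simp)
  have W1: "\<And>n. 1 \<le> W n" unfolding W_def K_def using lgc_nonneg by (simp add: add_increasing)
  have b1: "1 < b" unfolding b_def using c0 c1 by (simp add: field_simps)
  define m where "m = card T1"
  define N where "N = card T1 + card T2"
  have m1: "1 \<le> m" using less.prems unfolding m_def by (simp add: Suc_leI card_gt_0_iff)
  have logm: "0 \<le> log b m" using b1 m1 by simp
  show ?case
  proof (cases "T2 = {}")
    case True
    then have "merge_span c T1 T2 = 1" by (subst merge_span.simps, simp del: merge_span.simps)
    also have "1 \<le> W N * (2 + log b m)" using W1[of N] logm
      by (smt (verit) mult_le_cancel_left1)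
    finally show ?thesis unfolding W_def m_def N_def .
  next
    case T2ne: False
    define S where "S = {k. balanced_root c T1 k}"
    define f where "f = (\<lambda>k.
        let L2 = {y\<in>T2. y < k}; R2 = {y\<in>T2. k < y};
            L1 = {x\<in>T1. \<exists>y\<in>L2. x < y}; R1 = {x\<in>T1. \<exists>y\<in>R2. y < x};
            M = T1 - L1 - R1
        in 3 * lgc (card T2) + 2 * lgc (card T1)
           + max (merge_span c L1 L2) (merge_span c R1 R2)
           + lgc (card L1 + card L2 + card M) + lgc (card T1 + card T2))"
    have eq: "merge_span c T1 T2 = 1 + Max (f ` S)"
      unfolding f_def S_def using less.prems T2ne by (subst merge_span.simps, simp del: merge_span.simps)
    have child: "merge_span c L1 L2 \<le> W N * (1 + log b m)"
      if "L1 \<subseteq> T1" "L2 \<subseteq> T2" "real (card L1) \<le> (1 - c) * m" for L1 L2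
    proof (cases "L1 = {}")
      case True
      then have "merge_span c L1 L2 = 1" by (subst merge_span.simps, simp del: merge_span.simps)
      also have "1 \<le> W N * (1 + log b m)" using W1[of N] logm
        by (smt (verit) mult_le_cancel_left1)
      finally show ?thesis .
    next
      case False
      have finL1: "finite L1" using that less.prems finite_subset by blast
      have finL2: "finite L2" using that less.prems finite_subset by blast
      have cL1: "card L1 \<le> m" using that less.prems card_mono unfolding m_def by blast
      have cL2: "card L2 \<le> card T2" using that less.prems card_mono by blast
      have m1': "1 \<le> card L1" using False finL1 by (simp add: Suc_leI card_gt_0_iff)
      have "(1-c) * real m < real m" using c0 m1 by (simp add: algebra_simps)
      then have "real (card L1) < m" using that(3) by linarith
      then have "card L1 < card T1" unfolding m_def by simp
      from less.hyps[OF this finL1 finL2 False]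
      have IH: "merge_span c L1 L2 \<le> W (card L1 + card L2) * (2 + log b (card L1))"
        unfolding W_def .
      have "log b (card L1) \<le> log b ((1 - c) * m)"
        using that(3) m1' b1 by (subst log_le_cancel_iff) auto
      also have "\<dots> = log b (1-c) + log b m" using c1 m1 b1 by (subst log_mult) auto
      also have "log b (1-c) = -1" unfolding b_def using c0 c1
        by (simp add: log_def ln_div)
      finally have lg: "2 + log b (card L1) \<le> 1 + log b m" by simp
      have lg0: "0 \<le> 2 + log b (card L1)" using m1' b1 by simp
      have "W (card L1 + card L2) * (2 + log b (card L1)) \<le> W N * (2 + log b (card L1))"
        using Wmono[of "card L1 + card L2" N] cL1 cL2 lg0 unfolding N_def m_def
        by (intro mult_right_mono) auto
      also have "\<dots> \<le> W N * (1 + log b m)" using lg W1[of N] by (intro mult_left_mono) auto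
      finally show ?thesis using IH by linarith
    qed
    have fk: "f k \<le> 7 * lgc N + W N * (1 + log b m)" if kS: "k \<in> S" for k
    proof -
      define L2 where "L2 = {y\<in>T2. y < k}"
      define R2 where "R2 = {y\<in>T2. k < y}"
      define L1 where "L1 = {x\<in>T1. \<exists>y\<in>L2. x < y}"
      define R1 where "R1 = {x\<in>T1. \<exists>y\<in>R2. y < x}"
      define M where "M = T1 - L1 - R1"
      have fk: "f k = 3 * lgc (card T2) + 2 * lgc (card T1)
           + max (merge_span c L1 L2) (merge_span c R1 R2)
           + lgc (card L1 + card L2 + card M) + lgc (card T1 + card T2)"
        unfolding f_def L1_def L2_def R1_def R2_def M_def Let_def by simp
      have kT: "k \<in> T1" and lo: "real (card {x\<in>T1. x < k}) \<ge> c * m - 1"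
        and hi: "real (card {x\<in>T1. k < x}) \<ge> c * m - 1"
        using kS unfolding S_def balanced_root_def m_def by auto
      have cs: "card {x\<in>T1. x < k} + card {x\<in>T1. k < x} + 1 = m"
        unfolding m_def using card_split[OF less.prems(1) kT] .
      have L1s: "L1 \<subseteq> {x\<in>T1. x < k}" unfolding L1_def L2_def by auto
      have R1s: "R1 \<subseteq> {x\<in>T1. k < x}" unfolding R1_def R2_def by auto
      have "card L1 \<le> card {x\<in>T1. x < k}" using L1s less.prems(1) by (intro card_mono) auto
      then have cL1: "real (card L1) \<le> (1 - c) * m" using cs hi by (simp add: algebra_simps)
      have "card R1 \<le> card {x\<in>T1. k < x}" using R1s less.prems(1) by (intro card_mono) auto
      then have cR1: "real (card R1) \<le> (1 - c) * m" using cs lo by (simp add: algebra_simps)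
      have ch1: "merge_span c L1 L2 \<le> W N * (1 + log b m)"
        by (rule child) (use cL1 in \<open>auto simp: L1_def L2_def\<close>)
      have ch2: "merge_span c R1 R2 \<le> W N * (1 + log b m)"
        by (rule child) (use cR1 in \<open>auto simp: R1_def R2_def\<close>)
      have "card (L1 \<union> M) \<le> card T1" unfolding M_def using less.prems(1) L1s by (intro card_mono) auto
      moreover have "card (L1 \<union> M) = card L1 + card M"
        using less.prems(1) unfolding M_def L1_def by (intro card_Un_disjoint) auto
      moreover have "card L2 \<le> card T2" unfolding L2_def using less.prems(2) by (intro card_mono) auto
      ultimately have "card L1 + card L2 + card M \<le> N" unfolding N_def by linarith
      then have "lgc (card L1 + card L2 + card M) \<le> lgc N" by (rule lgc_mono)
      moreover have "lgc (card T2) \<le> lgc N" "lgc (card T1) \<le> lgc N" unfolding N_def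
        by (auto intro: lgc_mono)
      ultimately show ?thesis unfolding fk N_def using ch1 ch2 by (simp add: N_def)
    qed
    have "1 + Max (f ` S) \<le> W N * (2 + log b m)"
    proof (cases "S = {}")
      case True
      have "Max (f ` S) \<le> K" unfolding K_def True by simp
      then have "1 + Max (f ` S) \<le> W N" unfolding W_def using lgc_nonneg[of N] by simp
      also have "\<dots> \<le> W N * (2 + log b m)" using W1[of N] logm
        by (smt (verit) mult_le_cancel_left1)
      finally show ?thesis .
    next
      case False
      have "finite S" unfolding S_def balanced_root_def using less.prems(1)
        by (rule rev_finite_subset) auto
      then have "Max (f ` S) \<le> 7 * lgc N + W N * (1 + log b m)"
        using False fk by (subst Max_le_iff) auto
      moreover have "1 + 7 * lgc N \<le> W N" by (simp add: W_def K_def)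
      moreover have "W N * (2 + log b m) = W N + W N * (1 + log b m)" by (simp add: algebra_simps)
      ultimately show ?thesis by linarith
    qed
    then show ?thesis unfolding eq W_def m_def N_def .
  qed
qed


lemma merge_top:
  fixes c :: real
  assumes c0: "0 < c" and c1: "c \<le> 1/2"
  shows "\<exists>E\<ge>0. \<forall>(T1::'a::linorder set) T2 n. finite T1 \<and> finite T2 \<and> T1 \<noteq> {} \<and> card T1 + card T2 \<le> n \<and> 2 \<le> n
     \<longrightarrow> merge_span c T1 T2 \<le> E * (1 + log 2 n)^2"
proof -
  define b where "b = 1/(1-c)"
  define K where "K = \<bar>Max ({}::real set)\<bar>"
  define r where "r = log b 2"
  have b1: "1 < b" unfolding b_def using c0 c1 by (simp add: field_simps)
  have r0: "0 < r" unfolding r_def using b1 by simp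
  have K0: "0 \<le> K" unfolding K_def by simp
  define E where "E = (15 + K) * (2 + r)"
  have "\<forall>(T1::'a set) T2 n. finite T1 \<and> finite T2 \<and> T1 \<noteq> {} \<and> card T1 + card T2 \<le> n \<and> 2 \<le> n
     \<longrightarrow> merge_span c T1 T2 \<le> E * (1 + log 2 n)^2"
  proof (intro allI impI)
    fix T1 T2 :: "'a set" and n :: nat
    assume H: "finite T1 \<and> finite T2 \<and> T1 \<noteq> {} \<and> card T1 + card T2 \<le> n \<and> 2 \<le> n"
    define L where "L = log 2 n"
    have L0: "0 \<le> L" unfolding L_def using H by simp
    have mb: "merge_span c T1 T2 \<le> (1 + K + 7 * lgc (card T1 + card T2)) * (2 + log b (card T1))"
      using merge_bound[OF c0 c1, of T1 T2] H unfolding b_def K_def by blast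
    have m1: "1 \<le> card T1" using H by (simp add: Suc_leI card_gt_0_iff)
    have "lgc (card T1 + card T2) \<le> lgc n" using H by (intro lgc_mono) auto
    also have "lgc n \<le> 2 + L"
    proof -
      have "log 2 (real n + 2) \<le> log 2 (2 * real n)" using H by (subst log_le_cancel_iff) auto
      also have "\<dots> = 1 + L" unfolding L_def using H by (subst log_mult) auto
      finally show ?thesis unfolding lgc_def by simp
    qed
    finally have "1 + K + 7 * lgc (card T1 + card T2) \<le> 15 + K + 7 * L" by simp
    also have "\<dots> \<le> (15 + K) * (1 + L)" using K0 L0 by (simp add: algebra_simps)
    finally have w: "1 + K + 7 * lgc (card T1 + card T2) \<le> (15 + K) * (1 + L)" .
    have "log b (card T1) \<le> log b n" using H m1 b1 by (subst log_le_cancel_iff) auto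
    also have "log b n = r * L" unfolding r_def L_def log_def by simp
    finally have "2 + log b (card T1) \<le> 2 + r * L" by simp
    also have "\<dots> \<le> (2 + r) * (1 + L)" using r0 L0 by (simp add: algebra_simps)
    finally have l: "2 + log b (card T1) \<le> (2 + r) * (1 + L)" .
    have l0: "0 \<le> 2 + log b (card T1)" using m1 b1 by simp
    have "(1 + K + 7 * lgc (card T1 + card T2)) * (2 + log b (card T1)) \<le> ((15 + K) * (1 + L)) * ((2 + r) * (1 + L))"
      using w l l0 K0 L0 by (intro mult_mono) auto
    also have "\<dots> = E * (1 + L)^2" unfolding E_def by (simp add: power2_eq_square algebra_simps)
    finally show "merge_span c T1 T2 \<le> E * (1 + log 2 n)^2" using mb unfolding L_def by linarith
  qed
  moreover have "0 \<le> E" unfolding E_def using K0 r0 by simp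
  ultimately show ?thesis by blast
qed


lemma cube_gap:
  fixes a x d :: real
  assumes "0 \<le> x" "x + d \<le> a" "0 \<le> d"
  shows "d * a^2 \<le> a^3 - x^3"
proof -
  have "a^3 - x^3 = (a - x) * (a^2 + a*x + x^2)" by (simp add: power2_eq_square power3_eq_cube algebra_simps)
  moreover have "d * a^2 \<le> (a - x) * a^2" using assms by (intro mult_right_mono) auto
  moreover have "(a - x) * a^2 \<le> (a - x) * (a^2 + a*x + x^2)" using assms by (intro mult_left_mono) auto
  ultimately show ?thesis by linarith
qed

theorem lemma10:
  fixes c :: real
  assumes "0 < c" and "c \<le> 1/2"
  shows "\<exists>C. \<forall>xs :: 'a::linorder list. distinct xs \<and> length xs \<ge> 2 \<longrightarrow>
           sort_span c xs \<le> C * (log 2 (real (length xs))) ^ 3"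
proof -
  obtain E where E0: "0 \<le> E" and EH: "\<And>(T1::'a set) T2 n. finite T1 \<Longrightarrow> finite T2 \<Longrightarrow> T1 \<noteq> {} \<Longrightarrow>
      card T1 + card T2 \<le> n \<Longrightarrow> 2 \<le> n \<Longrightarrow> merge_span c T1 T2 \<le> E * (1 + log 2 n)^2"
    using merge_top[OF assms, where 'a='a] by blast
  define d where "d = - log 2 (3/4)"
  have d0: "0 < d" unfolding d_def by simp
  define G where "G = (1 + E) / d + 1"
  have G1: "1 \<le> G" unfolding G_def using E0 d0 by simp
  have Gd: "1 + E \<le> G * d" unfolding G_def using d0 E0 by (simp add: field_simps)
  have main: "\<forall>xs :: 'a list. length xs = n \<longrightarrow> 1 \<le> n \<longrightarrow> sort_span c xs \<le> G * (1 + log 2 n)^3" for n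
  proof (induction n rule: less_induct)
    case (less n)
    show ?case
    proof (intro allI impI)
      fix xs :: "'a list" assume len: "length xs = n" and n1: "1 \<le> n"
      define a where "a = 1 + log 2 n"
      have a1: "1 \<le> a" unfolding a_def using n1 by simp
      show "sort_span c xs \<le> G * (1 + log 2 n)^3"
      proof (cases "n = 1")
        case True
        then have "sort_span c xs = 1" using len by (subst sort_span.simps) simp
        then show ?thesis using True G1 by simp
      next
        case False
        then have n2: "2 \<le> n" using n1 by simp
        define h where "h = n div 2"
        have eq: "sort_span c xs = 1 + max (sort_span c (take h xs)) (sort_span c (drop h xs))
            + merge_span c (set (take h xs)) (set (drop h xs))"
          using n2 len unfolding h_def by (subst sort_span.simps) simp
        have child: "sort_span c ys \<le> G * (a - d)^3" if "length ys < n" "1 \<le> length ys"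
          "4 * length ys \<le> 3 * n" for ys :: "'a list"
        proof -
          have IH: "sort_span c ys \<le> G * (1 + log 2 (length ys))^3" using less.IH that by blast
          have "log 2 (length ys) \<le> log 2 (3/4 * n)" using that by (subst log_le_cancel_iff) auto
          also have "\<dots> = log 2 n - d" unfolding d_def using n1 by (subst log_mult) auto
          finally have "1 + log 2 (length ys) \<le> a - d" unfolding a_def by simp
          moreover have "0 \<le> log 2 (length ys)" using that(2) by (intro zero_le_log_cancel_iff[THEN iffD2]) auto
          then have "0 \<le> 1 + log 2 (length ys)" by simp
          ultimately have "(1 + log 2 (length ys))^3 \<le> (a - d)^3" by (intro power_mono) auto
          then show ?thesis using IH G1 by (smt (verit) mult_left_mono)
        qed
        have c1: "sort_span c (take h xs) \<le> G * (a - d)^3"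
          using n2 len unfolding h_def by (intro child) auto
        have c2: "sort_span c (drop h xs) \<le> G * (a - d)^3"
          using n2 len unfolding h_def by (intro child) auto
        have "card (set (take h xs)) + card (set (drop h xs)) \<le> length (take h xs) + length (drop h xs)"
          by (intro add_mono card_length)
        then have "card (set (take h xs)) + card (set (drop h xs)) \<le> n" using len by simp
        moreover have "set (take h xs) \<noteq> {}" using n2 len unfolding h_def by auto
        ultimately have mg: "merge_span c (set (take h xs)) (set (drop h xs)) \<le> E * a^2"
          unfolding a_def using n2 by (intro EH) auto
        have ad: "1 \<le> a - d"
        proof -
          have "4 * h \<le> 3 * n" "1 \<le> h" "h < n" using n2 unfolding h_def by auto
          have "log 2 h \<le> log 2 (3/4 * n)" using \<open>4 * h \<le> 3 * n\<close> \<open>1 \<le> h\<close> by (subst log_le_cancel_iff) auto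
          also have "\<dots> = log 2 n - d" unfolding d_def using n1 by (subst log_mult) auto
          moreover have "0 \<le> log 2 h" using \<open>1 \<le> h\<close> by (intro zero_le_log_cancel_iff[THEN iffD2]) auto
          ultimately show ?thesis unfolding a_def by linarith
        qed
        have gap: "d * a^2 \<le> a^3 - (a - d)^3" using ad d0 by (intro cube_gap) auto
        have "1 + E * a^2 \<le> (1 + E) * a^2" using a1 by (simp add: algebra_simps)
        also have "\<dots> \<le> G * d * a^2" using Gd by (intro mult_right_mono) auto
        also have "\<dots> \<le> G * (a^3 - (a - d)^3)" using gap G1 by (simp add: mult.assoc mult_left_mono)
        finally have "1 + E * a^2 + G * (a - d)^3 \<le> G * a^3" by (simp add: algebra_simps)
        then show ?thesis unfolding eq a_def[symmetric] using c1 c2 mg by linarith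
      qed
    qed
  qed
  have "sort_span c xs \<le> (8 * G) * (log 2 (real (length xs))) ^ 3" if "length xs \<ge> 2" for xs :: "'a list"
  proof -
    define L where "L = log 2 (real (length xs))"
    have "log 2 2 \<le> log 2 (real (length xs))" using that by (subst log_le_cancel_iff) auto
    then have L1: "1 \<le> L" unfolding L_def by simp
    have "sort_span c xs \<le> G * (1 + L)^3" using main that unfolding L_def by simp
    also have "(1 + L)^3 \<le> (2 * L)^3" using L1 by (intro power_mono) auto
    then have "G * (1 + L)^3 \<le> G * (2 * L)^3" using G1 by simp
    finally show ?thesis by (simp add: L_def power_mult_distrib)
  qed
  then show ?thesis by blast
qed

end
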